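(* Let $p\ge1$ and $m\ge0$ be integers, $\nu\in[0,1/2]$, and $\delta_{p,\nu}=1+\nu/p^2$. Then $$\|T_p^{(m)}\|_{L^\infty(-\delta_{p,\nu},\delta_{p,\nu})}\le\frac{p^{2m}e^{\nu}}{\prod_{\ell=0}^{m-1}(2\ell+1)}.$$ For $x=1+\varepsilon\in[1,\delta_{p,\nu}]$ and $p\ge m+1$, $$T_p^{(m)}(x)\ge\Big(1+\frac{p^2-m^2}{2m+1}\varepsilon\Big)\prod_{\ell=0}^{m-1}\frac{p^2-\ell^2}{2\ell+1}.$$ Moreover $T_p(\delta_{p,\nu})\ge1+\nu$.
   Context: $T_p$ denotes the Chebyshev polynomial of the first kind of degree $p$ ($T_p(\cos\theta)=\cos(p\theta)$), and $T_p^{(m)}$ its $m$-th derivative; empty products equal $1$. *)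

theory Defs
  imports "HOL-Analysis.Analysis" "HOL-Computational_Algebra.Polynomial"
begin

fun cheb_T :: "nat \<Rightarrow> real poly" where
  "cheb_T 0 = 1"
| "cheb_T (Suc 0) = [:0, 1:]"
| "cheb_T (Suc (Suc n)) = [:0, 2:] * cheb_T (Suc n) - cheb_T n"

definition cheb_T_deriv :: "nat \<Rightarrow> nat \<Rightarrow> real poly" where
  "cheb_T_deriv p m = (pderiv ^^ m) (cheb_T p)"

end

theory Submission
  imports Defs
begin

fun cheb_U :: "nat \<Rightarrow> real poly" where
  "cheb_U 0 = 1"
| "cheb_U (Suc 0) = [:0, 2:]"
| "cheb_U (Suc (Suc n)) = [:0, 2:] * cheb_U (Suc n) - cheb_U n"

lemma rec_eq:
  fixes f g :: "nat \<Rightarrow> real poly"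
  assumes "f 0 = g 0" "f 1 = g 1"
    "\<And>n. f (Suc (Suc n)) = [:0,2:] * f (Suc n) - f n"
    "\<And>n. g (Suc (Suc n)) = [:0,2:] * g (Suc n) - g n"
  shows "f n = g n"
proof -
  have "f n = g n \<and> f (Suc n) = g (Suc n)"
  proof (induction n)
    case 0
    then show ?case using assms(1,2) by simp
  next
    case (Suc n)
    then show ?case by (simp only: assms(3,4))
  qed
  then show ?thesis by simp
qed

lemma peq:
  fixes p q :: "real poly"
  assumes "\<And>x. poly p x = poly q x" shows "p = q"
proof -
  have "poly p = poly q" by (rule ext) (rule assms)
  then show ?thesis by (metis poly_eq_poly_eq_iff)
qed

lemma chebA: "cheb_T (Suc (Suc n)) = [:0,1:] * cheb_U (Suc n) - cheb_U n"
proof (rule rec_eq[of "\<lambda>n. cheb_T (Suc (Suc n))" "\<lambda>n. [:0,1:] * cheb_U (Suc n) - cheb_U n"])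
  show "cheb_T (Suc (Suc 0)) = [:0,1:] * cheb_U (Suc 0) - cheb_U 0"
    by (rule peq) (simp add: algebra_simps)
  show "cheb_T (Suc (Suc 1)) = [:0,1:] * cheb_U (Suc 1) - cheb_U 1"
    by (rule peq) (simp add: algebra_simps)
  show "cheb_T (Suc (Suc (Suc (Suc n)))) = [:0,2:] * cheb_T (Suc (Suc (Suc n))) - cheb_T (Suc (Suc n))" for n
    by (simp only: cheb_T.simps)
  show "[:0,1:] * cheb_U (Suc (Suc (Suc n))) - cheb_U (Suc (Suc n)) =
       [:0,2:] * ([:0,1:] * cheb_U (Suc (Suc n)) - cheb_U (Suc n)) - ([:0,1:] * cheb_U (Suc n) - cheb_U n)" for n
    by (simp only: cheb_U.simps) (simp add: algebra_simps)
qed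

lemma chebD: "[:1,0,-1:] * cheb_U n = cheb_T n - [:0,1:] * cheb_T (Suc n)"
proof (rule rec_eq[of "\<lambda>n. [:1,0,-1:] * cheb_U n" "\<lambda>n. cheb_T n - [:0,1:] * cheb_T (Suc n)"])
  show "[:1,0,-1:] * cheb_U 0 = cheb_T 0 - [:0,1:] * cheb_T (Suc 0)"
    by (rule peq) (simp add: algebra_simps)
  show "[:1,0,-1:] * cheb_U 1 = cheb_T 1 - [:0,1:] * cheb_T (Suc 1)"
    by (rule peq) (simp add: algebra_simps)
  show "[:1,0,-1:] * cheb_U (Suc (Suc n)) = [:0,2:] * ([:1,0,-1:] * cheb_U (Suc n)) - [:1,0,-1:] * cheb_U n" for n
    by (simp only: cheb_U.simps) (simp add: algebra_simps)
  show "cheb_T (Suc (Suc n)) - [:0,1:] * cheb_T (Suc (Suc (Suc n))) =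
       [:0,2:] * (cheb_T (Suc n) - [:0,1:] * cheb_T (Suc (Suc n))) - (cheb_T n - [:0,1:] * cheb_T (Suc n))" for n
    by (simp only: cheb_T.simps) (simp add: algebra_simps)
qed

lemma chebC: "cheb_U (Suc (Suc n)) = cheb_U n + smult 2 (cheb_T (Suc (Suc n)))"
  by (rule peq) (simp only: chebA cheb_U.simps; simp add: algebra_simps)

lemma chebB: "pderiv (cheb_T (Suc n)) = smult (of_nat (Suc n)) (cheb_U n)"
proof -
  have "pderiv (cheb_T (Suc n)) = smult (of_nat (Suc n)) (cheb_U n) \<and>
        pderiv (cheb_T (Suc (Suc n))) = smult (of_nat (Suc (Suc n))) (cheb_U (Suc n))"
  proof (induction n)
    case 0
    then show ?case by (simp add: pderiv_pCons pderiv_mult pderiv_diff)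
  next
    case (Suc n)
    have e: "pderiv (cheb_T (Suc (Suc (Suc n)))) =
      smult 2 (cheb_T (Suc (Suc n))) + [:0,2:] * pderiv (cheb_T (Suc (Suc n))) - pderiv (cheb_T (Suc n))"
      by (simp only: cheb_T.simps pderiv_diff pderiv_mult) (simp add: pderiv_pCons)
    have "pderiv (cheb_T (Suc (Suc (Suc n)))) = smult (of_nat (Suc (Suc (Suc n)))) (cheb_U (Suc (Suc n)))"
      unfolding e using Suc.IH
      apply (simp only: chebA cheb_U.simps)
      apply (rule peq)
      apply (simp add: algebra_simps)
      done
    with Suc.IH show ?case by simp
  qed
  then show ?thesis by simp
qed

lemma ode0: "[:1,0,-1:] * pderiv (pderiv (cheb_T p)) - [:0,1:] * pderiv (cheb_T p)
   + smult ((real p)^2) (cheb_T p) = 0"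
proof (cases p)
  case 0
  then show ?thesis by simp
next
  case (Suc n)
  show ?thesis
  proof (cases n)
    case 0
    then show ?thesis using Suc by (simp add: pderiv_pCons)
  next
    case (Suc k)
    have d1: "pderiv (cheb_T (Suc (Suc k))) = smult (real k + 2) (cheb_U (Suc k))"
      using chebB[of "Suc k"] by (simp add: add.commute)
    have d0: "pderiv (cheb_T (Suc k)) = smult (real k + 1) (cheb_U k)"
      using chebB[of k] by (simp add: add.commute)
    have a: "cheb_T (Suc (Suc k)) = [:0,1:] * cheb_U (Suc k) - cheb_U k" by (rule chebA)
    have D: "[:1,0,-1:] * cheb_U (Suc k) = cheb_T (Suc k) - [:0,1:] * cheb_T (Suc (Suc k))"
      by (rule chebD)
    have h: "pderiv ([:1,0,-1:] * cheb_U (Suc k)) = pderiv (cheb_T (Suc k) - [:0,1:] * cheb_T (Suc (Suc k)))"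
      using D by simp
    have h2: "poly (pderiv ([:1,0,-1:] * cheb_U (Suc k))) x = poly (pderiv (cheb_T (Suc k) - [:0,1:] * cheb_T (Suc (Suc k)))) x" for x
      using h by simp
    have h3: "(1 - x*x) * poly (pderiv (cheb_U (Suc k))) x - 2 * x * poly (cheb_U (Suc k)) x
       = (real k + 1) * poly (cheb_U k) x - poly (cheb_T (Suc (Suc k))) x - x * ((real k + 2) * poly (cheb_U (Suc k)) x)" for x
      using h2[of x] unfolding pderiv_mult pderiv_diff d1 d0
      by (simp add: pderiv_pCons algebra_simps)
    have a2: "poly (cheb_T (Suc (Suc k))) x = x * poly (cheb_U (Suc k)) x - poly (cheb_U k) x" for x
      using a by simp
    have pp: "p = Suc (Suc k)" using \<open>p = Suc n\<close> \<open>n = Suc k\<close> by simp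
    have pd: "pderiv (pderiv (cheb_T p)) = smult (real k + 2) (pderiv (cheb_U (Suc k)))"
      using d1 pp by (simp add: pderiv_smult)
    have pd1: "pderiv (cheb_T p) = smult (real k + 2) (cheb_U (Suc k))"
      using d1 pp by simp
    show ?thesis
    proof (rule peq)
      fix x
      have X: "(1 - x*x) * ((real k + 2) * poly (pderiv (cheb_U (Suc k))) x) - x * ((real k + 2) * poly (cheb_U (Suc k)) x)
         + (real k + 2)^2 * poly (cheb_T (Suc (Suc k))) x = 0"
        using h3[of x] a2[of x] by (simp add: algebra_simps power2_eq_square) algebra
      show "poly ([:1,0,-1:] * pderiv (pderiv (cheb_T p)) - [:0,1:] * pderiv (cheb_T p)
         + smult ((real p)^2) (cheb_T p)) x = poly 0 x"
        unfolding pd pd1 using X pp by (simp del: cheb_T.simps add: pderiv_smult algebra_simps)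
    qed
  qed
qed

lemma deriv_Suc: "cheb_T_deriv p (Suc m) = pderiv (cheb_T_deriv p m)"
  unfolding cheb_T_deriv_def by simp

lemma deriv_0: "cheb_T_deriv p 0 = cheb_T p"
  unfolding cheb_T_deriv_def by simp

lemma odeM: "[:1,0,-1:] * cheb_T_deriv p (Suc (Suc m)) - smult (2 * real m + 1) ([:0,1:] * cheb_T_deriv p (Suc m))
   + smult ((real p)^2 - (real m)^2) (cheb_T_deriv p m) = 0"
proof (induction m)
  case 0
  then show ?case using ode0[of p] by (simp add: deriv_Suc deriv_0)
next
  case (Suc m)
  have "pderiv ([:1,0,-1:] * cheb_T_deriv p (Suc (Suc m)) - smult (2 * real m + 1) ([:0,1:] * cheb_T_deriv p (Suc m))
   + smult ((real p)^2 - (real m)^2) (cheb_T_deriv p m)) = 0"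
    using Suc.IH by simp
  then have "poly (pderiv ([:1,0,-1:] * cheb_T_deriv p (Suc (Suc m)) - smult (2 * real m + 1) ([:0,1:] * cheb_T_deriv p (Suc m))
   + smult ((real p)^2 - (real m)^2) (cheb_T_deriv p m))) x = 0" for x
    by simp
  then have e: "(1 - x*x) * poly (cheb_T_deriv p (Suc (Suc (Suc m)))) x - 2 * x * poly (cheb_T_deriv p (Suc (Suc m))) x
     - (2 * real m + 1) * (poly (cheb_T_deriv p (Suc m)) x + x * poly (cheb_T_deriv p (Suc (Suc m))) x)
     + ((real p)^2 - (real m)^2) * poly (cheb_T_deriv p (Suc m)) x = 0" for x
    unfolding pderiv_add pderiv_diff pderiv_mult pderiv_smult deriv_Suc[symmetric]
    by (simp add: pderiv_pCons algebra_simps)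
  show ?case
  proof (rule peq)
    fix x
    show "poly ([:1,0,-1:] * cheb_T_deriv p (Suc (Suc (Suc m))) - smult (2 * real (Suc m) + 1) ([:0,1:] * cheb_T_deriv p (Suc (Suc m)))
      + smult ((real p)^2 - (real (Suc m))^2) (cheb_T_deriv p (Suc m))) x = poly 0 x"
      using e[of x] by (simp add: algebra_simps power2_eq_square)
  qed
qed

lemma at1: "poly (cheb_T_deriv p m) 1 = (\<Prod>l<m. ((real p)^2 - (real l)^2) / (2 * real l + 1))"
proof (induction m)
  case 0
  have "poly (cheb_T p) 1 = 1 \<and> poly (cheb_T (Suc p)) 1 = 1"
    by (induction p) auto
  then show ?case by (simp add: deriv_0)
next
  case (Suc m)
  have "poly ([:1,0,-1:] * cheb_T_deriv p (Suc (Suc m)) - smult (2 * real m + 1) ([:0,1:] * cheb_T_deriv p (Suc m))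
   + smult ((real p)^2 - (real m)^2) (cheb_T_deriv p m)) 1 = 0"
    using odeM[of p m] by simp
  then have "(2 * real m + 1) * poly (cheb_T_deriv p (Suc m)) 1 = ((real p)^2 - (real m)^2) * poly (cheb_T_deriv p m) 1"
    by simp
  then have "poly (cheb_T_deriv p (Suc m)) 1 = ((real p)^2 - (real m)^2) / (2 * real m + 1) * poly (cheb_T_deriv p m) 1"
    by (simp add: field_simps)
  then show ?case using Suc.IH by (simp add: mult.commute)
qed

inductive NC :: "real poly \<Rightarrow> bool" where
  NC0: "NC 0"
| NCs: "NC q \<Longrightarrow> c \<ge> 0 \<Longrightarrow> NC (q + smult c (cheb_T k))"

lemma NC_add: "NC b \<Longrightarrow> NC a \<Longrightarrow> NC (a + b)"
proof (induction b rule: NC.induct)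
  case NC0
  then show ?case by simp
next
  case (NCs q c k)
  then have "NC ((a + q) + smult c (cheb_T k))" by (intro NC.NCs) auto
  then show ?case by (simp add: add.assoc)
qed

lemma NC_smult: "NC a \<Longrightarrow> c \<ge> 0 \<Longrightarrow> NC (smult c a)"
proof (induction a rule: NC.induct)
  case NC0
  then show ?case by (simp add: NC.NC0)
next
  case (NCs q d k)
  then have "NC (smult c q + smult (c*d) (cheb_T k))" by (intro NC.NCs) auto
  then show ?case by (simp add: smult_add_right)
qed

lemma NC_T: "NC (cheb_T k)"
  using NC.NCs[OF NC.NC0, of 1 k] by simp

lemma NC_U: "NC (cheb_U n)"
proof -
  have "NC (cheb_U n) \<and> NC (cheb_U (Suc n))"
  proof (induction n)
    case 0
    have "NC (smult 2 (cheb_T 1))" by (rule NC_smult[OF NC_T]) simp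
    then show ?case using NC_T[of 0] by (simp add: smult_pCons)
  next
    case (Suc n)
    have "NC (cheb_U n + smult 2 (cheb_T (Suc (Suc n))))"
      using Suc by (intro NC_add NC_smult NC_T) auto
    then show ?case using Suc by (simp only: chebC)
  qed
  then show ?thesis by simp
qed

lemma NC_dT: "NC (pderiv (cheb_T k))"
proof (cases k)
  case 0
  then show ?thesis by (simp add: NC.NC0)
next
  case (Suc n)
  then show ?thesis by (simp add: chebB NC_smult NC_U)
qed

lemma NC_pderiv: "NC q \<Longrightarrow> NC (pderiv q)"
proof (induction q rule: NC.induct)
  case NC0
  then show ?case by (simp add: NC.NC0)
next
  case (NCs q c k)
  then show ?case by (simp add: pderiv_add pderiv_smult NC_add NC_smult NC_dT)
qed

lemma NC_D: "NC (cheb_T_deriv p m)"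
  by (induction m) (simp_all add: deriv_0 deriv_Suc NC_T NC_pderiv)

lemma T_cos: "poly (cheb_T k) (cos t) = cos (real k * t)"
proof -
  have "poly (cheb_T k) (cos t) = cos (real k * t) \<and> poly (cheb_T (Suc k)) (cos t) = cos (real (Suc k) * t)"
  proof (induction k)
    case 0
    then show ?case by simp
  next
    case (Suc k)
    have "cos (real (Suc (Suc k)) * t) = 2 * cos t * cos (real (Suc k) * t) - cos (real k * t)"
    proof -
      have "cos (real (Suc (Suc k)) * t) = cos (real (Suc k) * t + t)" by (simp add: algebra_simps)
      moreover have "cos (real k * t) = cos (real (Suc k) * t - t)" by (simp add: algebra_simps)
      ultimately show ?thesis by (simp only: cos_add cos_diff) simp
    qed
    then show ?case using Suc by simp
  qed
  then show ?thesis by simp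
qed

lemma T_bound: "\<bar>x\<bar> \<le> 1 \<Longrightarrow> \<bar>poly (cheb_T k) x\<bar> \<le> 1"
proof -
  assume "\<bar>x\<bar> \<le> 1"
  then have "cos (arccos x) = x" by (simp add: cos_arccos_abs)
  then have "poly (cheb_T k) x = cos (real k * arccos x)" using T_cos[of k "arccos x"] by simp
  then show ?thesis by simp
qed

lemma T_one: "poly (cheb_T k) 1 = 1"
  using T_cos[of k 0] by simp

lemma NC_bound: "NC q \<Longrightarrow> \<bar>x\<bar> \<le> 1 \<Longrightarrow> \<bar>poly q x\<bar> \<le> poly q 1"
proof (induction q rule: NC.induct)
  case NC0
  then show ?case by simp
next
  case (NCs q c k)
  have "\<bar>poly q x + c * poly (cheb_T k) x\<bar> \<le> \<bar>poly q x\<bar> + c * \<bar>poly (cheb_T k) x\<bar>"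
    using abs_triangle_ineq[of "poly q x" "c * poly (cheb_T k) x"] NCs(2) by (simp add: abs_mult)
  also have "\<dots> \<le> poly q 1 + c * 1"
    using NCs T_bound[of x k] by (intro add_mono mult_left_mono) auto
  finally show ?case by (simp add: T_one)
qed

lemma poly_comp_deriv:
  "((\<lambda>t. poly q (s*(1+t))) has_real_derivative poly (pderiv q) (s*(1+t)) * s) (at t)"
proof -
  have "((\<lambda>t. s*(1+t)) has_real_derivative s) (at t)"
    by (auto intro!: derivative_eq_intros)
  then show ?thesis using DERIV_chain2[OF poly_DERIV] by blast
qed

lemma grow:
  fixes q :: "real poly" and s c b K \<epsilon> :: real
  assumes s: "s = 1 \<or> s = -1" and q0: "\<bar>poly q s\<bar> \<le> c" and K: "K \<ge> 0" and b: "b \<le> K*c"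
    and d: "\<And>t. t \<ge> 0 \<Longrightarrow> \<bar>poly (pderiv q) (s*(1+t))\<bar> \<le> b * exp(K*t)"
    and e: "\<epsilon> \<ge> 0"
  shows "\<bar>poly q (s*(1+\<epsilon>))\<bar> \<le> c * exp(K*\<epsilon>)"
proof -
  have key: "\<sigma> * poly q (s*(1+\<epsilon>)) \<le> c*exp(K*\<epsilon>)" if \<sigma>: "\<sigma> = 1 \<or> \<sigma> = -1" for \<sigma>
  proof -
    let ?g = "\<lambda>t. c*exp(K*t) - \<sigma>*poly q (s*(1+t))"
    have "?g 0 \<le> ?g \<epsilon>"
    proof (rule deriv_nonneg_imp_mono[where g = ?g and g' = "\<lambda>t. c*(exp(K*t)*K) - \<sigma>*(poly (pderiv q) (s*(1+t)) * s)"])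
      fix t assume t: "t \<in> {0..\<epsilon>}"
      show "(?g has_real_derivative c*(exp(K*t)*K) - \<sigma>*(poly (pderiv q) (s*(1+t)) * s)) (at t)"
        by (intro derivative_intros poly_comp_deriv DERIV_cmult) (auto intro!: derivative_eq_intros)
      have t0: "t \<ge> 0" using t by simp
      have "\<bar>\<sigma>*(poly (pderiv q) (s*(1+t)) * s)\<bar> = \<bar>poly (pderiv q) (s*(1+t))\<bar>"
        using s \<sigma> by (auto simp: abs_mult)
      also have "\<dots> \<le> b * exp(K*t)" using d[OF t0] .
      also have "\<dots> \<le> K*c*exp(K*t)" using b by (intro mult_right_mono) auto
      finally show "0 \<le> c*(exp(K*t)*K) - \<sigma>*(poly (pderiv q) (s*(1+t)) * s)"
        by (simp add: algebra_simps)
    qed (use e in auto)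
    moreover have "?g 0 \<ge> 0" using q0 \<sigma> by auto
    ultimately show ?thesis by simp
  qed
  show ?thesis using key[of 1] key[of "-1"] by (simp add: abs_le_iff)
qed

lemma mono1:
  fixes q :: "real poly"
  assumes d: "\<And>x. x \<ge> 1 \<Longrightarrow> poly (pderiv q) x \<ge> 0" and x: "x \<ge> 1"
  shows "poly q 1 \<le> poly q x"
  by (rule deriv_nonneg_imp_mono[where g = "poly q" and g' = "\<lambda>t. poly (pderiv q) t"]) (use d x in auto)

lemma down_induct:
  assumes "\<And>j. j > N \<Longrightarrow> P j" "\<And>j. P (Suc j) \<Longrightarrow> P j"
  shows "P j"
proof -
  have "\<forall>j. N < j + k \<longrightarrow> P j" for k
  proof (induction k)
    case 0
    then show ?case using assms(1) by simp
  next
    case (Suc k)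
    show ?case
    proof (intro allI impI)
      fix j assume "N < j + Suc k"
      then have "N < Suc j + k" by simp
      then have "P (Suc j)" using Suc by blast
      then show "P j" by (rule assms(2))
    qed
  qed
  from this[of "Suc N"] show ?thesis by simp
qed

lemma degT: "degree (cheb_T n) \<le> n"
proof -
  have "degree (cheb_T n) \<le> n \<and> degree (cheb_T (Suc n)) \<le> Suc n"
  proof (induction n)
    case 0
    then show ?case by simp
  next
    case (Suc n)
    have "degree ([:0,2:] * cheb_T (Suc n)) \<le> Suc (Suc n)"
      using degree_mult_le[of "[:0,2:]" "cheb_T (Suc n)"] Suc by (simp del: cheb_T.simps)
    moreover have "degree (cheb_T n) \<le> Suc (Suc n)" using Suc by simp
    ultimately have "degree ([:0,2:] * cheb_T (Suc n) - cheb_T n) \<le> Suc (Suc n)"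
      by (rule degree_diff_le)
    then have "degree (cheb_T (Suc (Suc n))) \<le> Suc (Suc n)" by (simp only: cheb_T.simps)
    then show ?case using Suc by simp
  qed
  then show ?thesis by simp
qed

lemma D_zero: "j > p \<Longrightarrow> cheb_T_deriv p j = 0"
proof -
  have dg: "degree (cheb_T_deriv p j) \<le> p - j" for j
    by (induction j) (use degT in \<open>auto simp: deriv_0 deriv_Suc degree_pderiv\<close>)
  assume "j > p"
  then obtain i where "j = Suc i" "i \<ge> p" by (cases j) auto
  then show ?thesis using dg[of i] by (simp add: deriv_Suc pderiv_eq_0_iff)
qed

definition aa :: "nat \<Rightarrow> nat \<Rightarrow> real" where
  "aa p j = (real p)^(2*j) / (\<Prod>l<j. (2 * real l + 1))"

lemma prod_pos': "(\<Prod>l<j. (2 * real l + 1)) > 0"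
  by (rule prod_pos) auto

lemma aa_nonneg: "aa p j \<ge> 0"
  unfolding aa_def using prod_pos'[of j] by simp

lemma aa_Suc: "aa p (Suc j) \<le> (real p)^2 * aa p j"
proof -
  have "aa p (Suc j) = (real p)^2 * aa p j / (2 * real j + 1)"
    unfolding aa_def by (simp add: power_mult field_simps power2_eq_square)
  also have "\<dots> \<le> (real p)^2 * aa p j"
    using aa_nonneg[of p j] frac_le[of "(real p)^2 * aa p j" "(real p)^2 * aa p j" 1 "2 * real j + 1"] by simp
  finally show ?thesis .
qed

lemma F1: "0 \<le> poly (cheb_T_deriv p j) 1 \<and> poly (cheb_T_deriv p j) 1 \<le> aa p j"
proof (cases "j \<le> p")
  case True
  have fac: "0 \<le> ((real p)^2 - (real l)^2) / (2 * real l + 1) \<and>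
      ((real p)^2 - (real l)^2) / (2 * real l + 1) \<le> (real p)^2 / (2 * real l + 1)" if "l \<in> {..<j}" for l
  proof -
    have "real l \<le> real p" using that True by simp
    then have "(real l)^2 \<le> (real p)^2" by (intro power_mono) auto
    then show ?thesis by (auto intro!: divide_nonneg_pos divide_right_mono)
  qed
  have "(\<Prod>l<j. ((real p)^2 - (real l)^2) / (2 * real l + 1)) \<le> (\<Prod>l<j. (real p)^2 / (2 * real l + 1))"
    by (rule prod_mono) (use fac in blast)
  also have "\<dots> = aa p j"
    unfolding aa_def by (simp add: prod_dividef power_mult)
  moreover have "0 \<le> (\<Prod>l<j. ((real p)^2 - (real l)^2) / (2 * real l + 1))"
    by (intro prod_nonneg) (use fac in blast)
  ultimately show ?thesis by (simp add: at1)
next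
  case False
  have "(\<Prod>l<j. ((real p)^2 - (real l)^2) / (2 * real l + 1)) = 0"
    by (rule prod_zero) (use False in auto)
  note z = this
  show ?thesis unfolding at1 z using aa_nonneg[of p j] by simp
qed

lemma Gj: "\<forall>x\<ge>1. poly (cheb_T_deriv p j) x \<ge> 0"
proof (rule down_induct[where N = p])
  fix j assume "p < j"
  then show "\<forall>x\<ge>1. poly (cheb_T_deriv p j) x \<ge> 0" by (simp add: D_zero)
next
  fix j assume H: "\<forall>x\<ge>1. poly (cheb_T_deriv p (Suc j)) x \<ge> 0"
  show "\<forall>x\<ge>1. poly (cheb_T_deriv p j) x \<ge> 0"
  proof (intro allI impI)
    fix x :: real assume x: "x \<ge> 1"
    have "poly (cheb_T_deriv p j) 1 \<le> poly (cheb_T_deriv p j) x"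
      by (rule mono1) (use H x in \<open>auto simp: deriv_Suc[symmetric]\<close>)
    then show "poly (cheb_T_deriv p j) x \<ge> 0" using F1[of p j] by simp
  qed
qed

lemma Hj: "\<forall>\<epsilon>\<ge>0. \<forall>s. (s = 1 \<or> s = -1) \<longrightarrow>
   \<bar>poly (cheb_T_deriv p j) (s*(1+\<epsilon>))\<bar> \<le> aa p j * exp ((real p)^2 * \<epsilon>)"
proof (rule down_induct[where N = p and P = "\<lambda>j. \<forall>\<epsilon>\<ge>0. \<forall>s. (s = 1 \<or> s = -1) \<longrightarrow>
   \<bar>poly (cheb_T_deriv p j) (s*(1+\<epsilon>))\<bar> \<le> aa p j * exp ((real p)^2 * \<epsilon>)"])
  fix j assume "p < j"
  then show "\<forall>\<epsilon>\<ge>0. \<forall>s. (s = 1 \<or> s = -1) \<longrightarrow>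
   \<bar>poly (cheb_T_deriv p j) (s*(1+\<epsilon>))\<bar> \<le> aa p j * exp ((real p)^2 * \<epsilon>)"
    using aa_nonneg[of p j] by (simp add: D_zero)
next
  fix j assume H: "\<forall>\<epsilon>\<ge>0. \<forall>s. (s = 1 \<or> s = -1) \<longrightarrow>
   \<bar>poly (cheb_T_deriv p (Suc j)) (s*(1+\<epsilon>))\<bar> \<le> aa p (Suc j) * exp ((real p)^2 * \<epsilon>)"
  show "\<forall>\<epsilon>\<ge>0. \<forall>s. (s = 1 \<or> s = -1) \<longrightarrow>
   \<bar>poly (cheb_T_deriv p j) (s*(1+\<epsilon>))\<bar> \<le> aa p j * exp ((real p)^2 * \<epsilon>)"
  proof (intro allI impI)
    fix \<epsilon> s :: real assume e: "\<epsilon> \<ge> 0" and s: "s = 1 \<or> s = -1"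
    have q0: "\<bar>poly (cheb_T_deriv p j) s\<bar> \<le> aa p j"
    proof -
      have "\<bar>poly (cheb_T_deriv p j) s\<bar> \<le> poly (cheb_T_deriv p j) 1"
        by (rule NC_bound[OF NC_D]) (use s in auto)
      then show ?thesis using F1[of p j] by simp
    qed
    have d: "\<bar>poly (pderiv (cheb_T_deriv p j)) (s*(1+t))\<bar> \<le> aa p (Suc j) * exp ((real p)^2 * t)"
      if "t \<ge> 0" for t
      using H s that unfolding deriv_Suc[symmetric] by blast
    show "\<bar>poly (cheb_T_deriv p j) (s*(1+\<epsilon>))\<bar> \<le> aa p j * exp ((real p)^2 * \<epsilon>)"
      using grow[OF s q0 _ aa_Suc[of p j] d e] by simp
  qed
qed

lemma part2:
  assumes e: "\<epsilon> \<ge> 0"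
  shows "poly (cheb_T_deriv p m) (1 + \<epsilon>) \<ge> poly (cheb_T_deriv p m) 1 + \<epsilon> * poly (cheb_T_deriv p (Suc m)) 1"
proof -
  let ?g = "\<lambda>t. poly (cheb_T_deriv p m) (1 + t) - t * poly (cheb_T_deriv p (Suc m)) 1"
  have "?g 0 \<le> ?g \<epsilon>"
  proof (rule deriv_nonneg_imp_mono[where g = ?g and
        g' = "\<lambda>t. poly (cheb_T_deriv p (Suc m)) (1 + t) - poly (cheb_T_deriv p (Suc m)) 1"])
    fix t assume t: "t \<in> {0..\<epsilon>}"
    have "((\<lambda>t. poly (cheb_T_deriv p m) (1*(1+t))) has_real_derivative
        poly (pderiv (cheb_T_deriv p m)) (1*(1+t)) * 1) (at t)"
      by (rule poly_comp_deriv)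
    then have d: "((\<lambda>t. poly (cheb_T_deriv p m) (1+t)) has_real_derivative
        poly (cheb_T_deriv p (Suc m)) (1+t)) (at t)"
      by (simp add: deriv_Suc)
    show "(?g has_real_derivative poly (cheb_T_deriv p (Suc m)) (1 + t) - poly (cheb_T_deriv p (Suc m)) 1) (at t)"
      using d by (auto intro!: derivative_eq_intros simp: deriv_Suc)
    have "poly (cheb_T_deriv p (Suc m)) 1 \<le> poly (cheb_T_deriv p (Suc m)) (1 + t)"
      by (rule mono1) (use Gj[of p "Suc (Suc m)"] t in \<open>auto simp: deriv_Suc[symmetric]\<close>)
    then show "0 \<le> poly (cheb_T_deriv p (Suc m)) (1 + t) - poly (cheb_T_deriv p (Suc m)) 1" by simp
  qed (use e in auto)
  then show ?thesis by simp
qed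

theorem lemmaA1:
  fixes p m :: nat and \<nu> :: real
  assumes "p \<ge> 1" and "0 \<le> \<nu>" and "\<nu> \<le> 1/2"
  defines "\<delta> \<equiv> 1 + \<nu> / (real p)^2"
  shows "(\<forall>x::real. -\<delta> < x \<and> x < \<delta> \<longrightarrow>
            \<bar>poly (cheb_T_deriv p m) x\<bar>
              \<le> (real p)^(2*m) * exp \<nu> / (\<Prod>l<m. (2 * real l + 1)))
    \<and> (\<forall>\<epsilon>::real. 0 \<le> \<epsilon> \<and> 1 + \<epsilon> \<le> \<delta> \<and> p \<ge> m + 1 \<longrightarrow>
            poly (cheb_T_deriv p m) (1 + \<epsilon>)
              \<ge> (1 + ((real p)^2 - (real m)^2) / (2 * real m + 1) * \<epsilon>)
                 * (\<Prod>l<m. ((real p)^2 - (real l)^2) / (2 * real l + 1)))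
    \<and> poly (cheb_T p) \<delta> \<ge> 1 + \<nu>"
proof (intro conjI allI impI)
  have p2: "(real p)^2 > 0" using assms(1) by simp
  have am: "(real p)^(2*m) * exp \<nu> / (\<Prod>l<m. (2 * real l + 1)) = aa p m * exp \<nu>"
    by (simp add: aa_def)
  have ex1: "exp \<nu> \<ge> 1" using assms(2) by simp
  fix x :: real
  assume x: "-\<delta> < x \<and> x < \<delta>"
  show "\<bar>poly (cheb_T_deriv p m) x\<bar> \<le> (real p)^(2*m) * exp \<nu> / (\<Prod>l<m. (2 * real l + 1))"
    unfolding am
  proof (cases "\<bar>x\<bar> \<le> 1")
    case True
    have "\<bar>poly (cheb_T_deriv p m) x\<bar> \<le> poly (cheb_T_deriv p m) 1"
      by (rule NC_bound[OF NC_D True])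
    also have "\<dots> \<le> aa p m" using F1[of p m] by simp
    also have "\<dots> \<le> aa p m * exp \<nu>" using mult_left_mono[OF ex1 aa_nonneg[of p m]] by simp
    finally show "\<bar>poly (cheb_T_deriv p m) x\<bar> \<le> aa p m * exp \<nu>" .
  next
    case False
    obtain s \<epsilon> where s: "s = 1 \<or> s = -1" and e: "\<epsilon> \<ge> 0" and xe: "x = s * (1 + \<epsilon>)"
      and el: "\<epsilon> < \<nu> / (real p)^2"
    proof (cases "x > 1")
      case True
      then show ?thesis using that[of 1 "x - 1"] x unfolding \<delta>_def by auto
    next
      case False
      then have "x < -1" using \<open>\<not> \<bar>x\<bar> \<le> 1\<close> by auto
      then show ?thesis using that[of "-1" "-x - 1"] x unfolding \<delta>_def by auto
    qed
    have pe: "(real p)^2 * \<epsilon> \<le> \<nu>"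
      using el p2 by (simp add: field_simps)
    have "\<bar>poly (cheb_T_deriv p m) x\<bar> \<le> aa p m * exp ((real p)^2 * \<epsilon>)"
      using Hj[of p m] s e xe by blast
    also have "\<dots> \<le> aa p m * exp \<nu>"
      using pe aa_nonneg[of p m] by (intro mult_left_mono) auto
    finally show "\<bar>poly (cheb_T_deriv p m) x\<bar> \<le> aa p m * exp \<nu>" .
  qed
next
  fix \<epsilon> :: real
  assume h: "0 \<le> \<epsilon> \<and> 1 + \<epsilon> \<le> \<delta> \<and> p \<ge> m + 1"
  define P where "P = (\<Prod>l<m. ((real p)^2 - (real l)^2) / (2 * real l + 1))"
  have P1: "poly (cheb_T_deriv p m) 1 = P" unfolding P_def by (rule at1)
  have P2: "poly (cheb_T_deriv p (Suc m)) 1 = P * (((real p)^2 - (real m)^2) / (2 * real m + 1))"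
    unfolding P_def by (simp add: at1)
  have "poly (cheb_T_deriv p m) (1 + \<epsilon>) \<ge> P + \<epsilon> * (P * (((real p)^2 - (real m)^2) / (2 * real m + 1)))"
    using part2[of \<epsilon> p m] h P1 P2 by simp
  then show "poly (cheb_T_deriv p m) (1 + \<epsilon>) \<ge> (1 + ((real p)^2 - (real m)^2) / (2 * real m + 1) * \<epsilon>) * P"
    by (simp add: algebra_simps)
next
  have p2: "(real p)^2 > 0" using assms(1) by simp
  have e0: "\<nu> / (real p)^2 \<ge> 0" using assms(2) by simp
  have "poly (cheb_T_deriv p 0) (1 + \<nu> / (real p)^2) \<ge> poly (cheb_T_deriv p 0) 1 + \<nu> / (real p)^2 * poly (cheb_T_deriv p (Suc 0)) 1"
    by (rule part2[OF e0])
  moreover have "poly (cheb_T_deriv p 0) 1 = 1" by (simp add: at1)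
  moreover have "poly (cheb_T_deriv p (Suc 0)) 1 = (real p)^2" by (simp add: at1)
  ultimately have "poly (cheb_T p) (1 + \<nu> / (real p)^2) \<ge> 1 + \<nu>"
    using p2 by (simp add: deriv_0)
  then show "poly (cheb_T p) \<delta> \<ge> 1 + \<nu>" unfolding \<delta>_def .
qed

end
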